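(* Let $\mathcal{U}\subset\mathbb{C}^n$ be open with coordinates $z^\alpha$ ($\alpha=1,\dots,n$), and let $V=\begin{pmatrix}X^A\\ F_A\end{pmatrix}$ ($A=1,\dots,n$) be a holomorphic map $\mathcal{U}\to\mathbb{C}^{2n}$ such that $g_{\alpha\bar\beta}:=i\langle\partial_\alpha V,\overline{\partial_\beta V}\rangle$ is positive definite and $\langle\partial_\alpha V,\partial_\beta V\rangle=0$ for all $\alpha,\beta$. Then the matrix $e^A{}_\alpha=\partial_\alpha X^A$ is invertible, and locally there exists a holomorphic function $F(X)$ of $X^1,\dots,X^n$ such that $F_A=\partial F/\partial X^A$.
   Context: $\langle V,W\rangle=V^T\Omega W$ with $\Omega=\begin{pmatrix}0&\mathbb{1}\\-\mathbb{1}&0\end{pmatrix}$ ($n\times n$ blocks). *)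

theory Defs
  imports "HOL-Analysis.Analysis"
begin

definition holo_on :: "(complex^'n \<Rightarrow> complex) \<Rightarrow> (complex^'n) set \<Rightarrow> bool" where
  "holo_on f S \<longleftrightarrow>
     (\<forall>z\<in>S. \<exists>D. (f has_derivative D) (at z) \<and> (\<forall>c v. D (c *s v) = c * D v))"

definition pd :: "(complex^'n \<Rightarrow> complex) \<Rightarrow> 'n \<Rightarrow> complex^'n \<Rightarrow> complex" where
  "pd f a z = frechet_derivative f (at z) (axis a 1)"

text \<open>Symplectic pairing on C^{2n} = C^n x C^n, V = (X, F):
  <V,W> = V^T Omega W with Omega = ((0, 1), (-1, 0)).\<close>
definition symp :: "((complex^'n) \<times> (complex^'n)) \<Rightarrow> ((complex^'n) \<times> (complex^'n)) \<Rightarrow> complex" where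
  "symp V W = (\<Sum>A\<in>UNIV. fst V $ A * snd W $ A - snd V $ A * fst W $ A)"

definition dV :: "(complex^'n \<Rightarrow> complex^'n) \<Rightarrow> (complex^'n \<Rightarrow> complex^'n) \<Rightarrow> 'n \<Rightarrow> complex^'n
                   \<Rightarrow> (complex^'n) \<times> (complex^'n)" where
  "dV X F a z = ((\<chi> A. pd (\<lambda>w. X w $ A) a z), (\<chi> A. pd (\<lambda>w. F w $ A) a z))"

definition conjV :: "(complex^'n) \<times> (complex^'n) \<Rightarrow> (complex^'n) \<times> (complex^'n)" where
  "conjV V = ((\<chi> A. cnj (fst V $ A)), (\<chi> A. cnj (snd V $ A)))"

definition gmet :: "(complex^'n \<Rightarrow> complex^'n) \<Rightarrow> (complex^'n \<Rightarrow> complex^'n) \<Rightarrow> complex^'n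
                     \<Rightarrow> 'n \<Rightarrow> 'n \<Rightarrow> complex" where
  "gmet X F z a b = \<i> * symp (dV X F a z) (conjV (dV X F b z))"

definition pos_def_herm :: "('n::finite \<Rightarrow> 'n \<Rightarrow> complex) \<Rightarrow> bool" where
  "pos_def_herm g \<longleftrightarrow> (\<forall>\<xi>::complex^'n. \<xi> \<noteq> 0 \<longrightarrow>
      (let q = (\<Sum>a\<in>UNIV. \<Sum>b\<in>UNIV. \<xi> $ a * g a b * cnj (\<xi> $ b)) in Im q = 0 \<and> Re q > 0))"

end

theory Submission
  imports Defs "HOL-Complex_Analysis.Complex_Analysis"
begin

no_notation fps_nth (infixl "$" 75)


lemma holo_deriv:
  assumes "holo_on f U" "z \<in> U"
  shows "(f has_derivative (\<lambda>v. \<Sum>k\<in>UNIV. v$k * pd f k z)) (at z)"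
proof -
  obtain D where D: "(f has_derivative D) (at z)" "\<And>c v. D (c *s v) = c * D v"
    using assms unfolding holo_on_def by blast
  have pd: "pd f k z = D (axis k 1)" for k
    unfolding pd_def using frechet_derivative_at[OF D(1)] by simp
  have lin: "linear D" using D(1) has_derivative_linear by blast
  have "D v = (\<Sum>k\<in>UNIV. v$k * pd f k z)" for v
  proof -
    have "D v = D (\<Sum>k\<in>UNIV. v$k *s axis k 1)" by (simp add: basis_expansion)
    also have "\<dots> = (\<Sum>k\<in>UNIV. D (v$k *s axis k 1))" using linear_sum[OF lin] by blast
    also have "\<dots> = (\<Sum>k\<in>UNIV. v$k * pd f k z)" by (simp add: D(2) pd)
    finally show ?thesis .
  qed
  then have "D = (\<lambda>v. \<Sum>k\<in>UNIV. v$k * pd f k z)" by auto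
  with D(1) show ?thesis by simp
qed


definition sl :: "complex^'n \<Rightarrow> 'n \<Rightarrow> complex \<Rightarrow> complex^'n" where
  "sl z k u = z + (u - z$k) *s axis k 1"

lemma sl_same[simp]: "sl z k (z$k) = z" by (simp add: sl_def)

lemma smult_axis: "(c::complex) *s axis k 1 = axis k c"
  by (simp add: axis_def vec_eq_iff)

lemma norm_axis_c: "norm (axis k (c::complex)) = cmod c"
proof -
  have "(\<Sum>i\<in>UNIV. (norm (axis k c $ i))^2) = (\<Sum>i\<in>UNIV. if i = k then (cmod c)^2 else 0)"
    by (intro sum.cong) (auto simp: axis_def)
  then show ?thesis unfolding norm_vec_def L2_set_def by simp
qed

lemma norm_sl: "norm (sl z k u - z) = cmod (u - z$k)"
  by (simp add: sl_def smult_axis norm_axis_c)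

lemma has_derivative_sl: fixes z :: "complex^'n" shows "((sl z k) has_derivative (\<lambda>c. c *s axis k 1)) (at u)"
proof -
  have bl: "bounded_linear (\<lambda>c::complex. c *s (axis k 1 :: complex^'n))"
    unfolding smult_axis
    by (rule bounded_linear_intro[where K=1, OF _ _ order_eq_refl[OF trans[OF norm_axis_c]]])
       (auto simp: axis_def vec_eq_iff)
  have e: "(\<lambda>u. z + (u - z$k) *s axis k 1) = (\<lambda>u. (u *s axis k 1 - (z$k) *s axis k 1) + z)"
    by (auto simp: fun_eq_iff vec_eq_iff algebra_simps)
  have "((\<lambda>u. (u *s axis k 1 - (z$k) *s axis k 1) + z) has_derivative (\<lambda>c. c *s axis k 1 - 0)) (at u)"
    by (intro has_derivative_add_const has_derivative_diff bounded_linear.has_derivative[OF bl]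
        has_derivative_const has_derivative_ident)
  then have "((\<lambda>u. z + (u - z$k) *s axis k 1) has_derivative (\<lambda>c. c *s axis k 1)) (at u)"
    unfolding e by simp
  then show ?thesis unfolding sl_def by simp
qed

lemma slice_deriv:
  assumes "holo_on f U" "sl z k u \<in> U"
  shows "((\<lambda>u. f (sl z k u)) has_field_derivative pd f k (sl z k u)) (at u)"
proof -
  obtain D where D: "(f has_derivative D) (at (sl z k u))" "\<And>c v. D (c *s v) = c * D v"
    using assms unfolding holo_on_def by blast
  have pd: "pd f k (sl z k u) = D (axis k 1)"
    unfolding pd_def using frechet_derivative_at[OF D(1)] by simp
  have "((\<lambda>u. f (sl z k u)) has_derivative (\<lambda>c. D (c *s axis k 1))) (at u)"
    using has_derivative_compose[OF has_derivative_sl D(1)] by (simp add: o_def)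
  moreover have "(\<lambda>c. D (c *s axis k 1)) = (*) (D (axis k 1))"
    by (auto simp: D(2) fun_eq_iff mult.commute)
  ultimately show ?thesis unfolding has_field_derivative_def pd by simp
qed

lemma bl_axis: "bounded_linear (\<lambda>c::complex. axis k c :: complex^'n)"
  by (rule bounded_linear_intro[where K=1, OF _ _ order_eq_refl[OF trans[OF norm_axis_c]]])
     (auto simp: axis_def vec_eq_iff)

lemma sl_alt: "sl z k u = z + axis k (u - z$k)"
  by (simp add: sl_def smult_axis)

lemma cont_sl:
  fixes g :: "'a::topological_space \<Rightarrow> complex^'n"
  assumes "continuous_on S g" "continuous_on S h"
  shows "continuous_on S (\<lambda>p. sl (g p) k (h p))"
  unfolding sl_alt
  by (intro continuous_intros assms continuous_on_compose2[OF bounded_linear.continuous_on[OF bl_axis, of UNIV]]) auto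

lemma holo_cont: assumes "holo_on f U" shows "continuous_on U f"
  using assms unfolding holo_on_def
  by (meson continuous_at_imp_continuous_on has_derivative_continuous)

lemma pd_cont:
  fixes f :: "complex^'n \<Rightarrow> complex"
  assumes hol: "holo_on f U" and "open U"
  shows "continuous_on U (pd f k)"
proof (rule continuous_at_imp_continuous_on, rule)
  fix a assume "a \<in> U"
  obtain R where "R > 0" and R: "ball a R \<subseteq> U"
    using \<open>open U\<close> \<open>a \<in> U\<close> open_contains_ball by blast
  define r where "r = R/3"
  have "r > 0" using \<open>R > 0\<close> by (simp add: r_def)
  define \<gamma> where "\<gamma> = circlepath (a$k) r"
  have wk: "cmod (w$k - a$k) < r" if "w \<in> ball a r" for w
  proof -
    have "cmod (w$k - a$k) = cmod ((w - a)$k)" by simp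
    also have "\<dots> \<le> norm (w - a)" by (rule Finite_Cartesian_Product.norm_nth_le)
    also have "\<dots> < r" using that by (simp add: dist_norm norm_minus_commute)
    finally show ?thesis .
  qed
  have inU: "sl w k u \<in> U" if "w \<in> ball a r" "cmod (u - a$k) \<le> r" for w u
  proof -
    have "norm (sl w k u - a) \<le> norm (sl w k u - w) + norm (w - a)"
      by (rule norm_diff_triangle_le[where y=w]) simp_all
    also have "\<dots> = cmod (u - w$k) + norm (w - a)" by (simp add: norm_sl)
    also have "cmod (u - w$k) \<le> cmod (u - a$k) + cmod (w$k - a$k)"
      by (metis diff_add_cancel diff_diff_eq2 norm_triangle_ineq4)
    finally have "norm (sl w k u - a) < r + r + r"
      using wk[OF that(1)] that by (simp add: dist_norm norm_minus_commute)
    then show ?thesis using R by (auto simp: r_def dist_norm norm_minus_commute)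
  qed
  have rep: "pd f k w = 1 / (2 * of_real pi * \<i>) * contour_integral \<gamma> (\<lambda>u. f (sl w k u) / (u - w$k)^2)"
    if w: "w \<in> ball a r" for w
  proof -
    have contf: "continuous_on (cball (a$k) r) (\<lambda>u. f (sl w k u))"
      by (rule continuous_on_compose2[OF holo_cont[OF hol] cont_sl])
         (auto intro!: continuous_intros inU[OF w] simp: dist_norm norm_minus_commute)
    have holf: "(\<lambda>u. f (sl w k u)) holomorphic_on ball (a$k) r"
      unfolding holomorphic_on_open[OF open_ball]
    proof
      fix x assume "x \<in> ball (a$k) r"
      then have "sl w k x \<in> U" using inU[OF w, of x] by (simp add: dist_norm norm_minus_commute)
      then show "\<exists>f'. ((\<lambda>u. f (sl w k u)) has_field_derivative f') (at x)"
        using slice_deriv[OF hol] by blast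
    qed
    have wb: "w$k \<in> ball (a$k) r" using wk[OF w] by (simp add: dist_norm norm_minus_commute)
    have "((\<lambda>u. f (sl w k u)) has_field_derivative pd f k w) (at (w$k))"
      using slice_deriv[OF hol, of w k "w$k"] inU[OF w, of "w$k"] wk[OF w] by simp
    then show ?thesis
      using Cauchy_derivative_integral_circlepath(2)[OF contf holf wb] DERIV_unique
      unfolding \<gamma>_def by blast
  qed
  have cont: "continuous_on (ball a r) (\<lambda>w. contour_integral \<gamma> (\<lambda>u. f (sl w k u) / (u - w$k)^2))"
  proof -
    have g: "\<gamma> t = a$k + r * exp (2 * of_real pi * \<i> * t)" for t
      by (simp add: \<gamma>_def circlepath_def part_circlepath_def mult_ac)
    have gn: "cmod (\<gamma> t - a$k) = r" for t
      using \<open>r > 0\<close> by (simp add: g norm_mult)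
    have gn': "cmod (complex_of_real r * exp (2 * complex_of_real pi * \<i> * complex_of_real t)) = r" for t
      using gn[of t] by (simp add: g)
    have "continuous_on (ball a r \<times> cbox 0 1) (\<lambda>(w, t). f (sl w k (\<gamma> t)) / (\<gamma> t - w$k)^2 * vector_derivative \<gamma> (at t))"
    proof -
      have c1: "continuous_on (ball a r \<times> cbox 0 1) (\<lambda>p. f (sl (fst p) k (\<gamma> (snd p))))"
        by (rule continuous_on_compose2[OF holo_cont[OF hol] cont_sl])
           (auto intro!: continuous_intros inU simp: gn' simp del: circlepath simp add: g)
      have ne: "\<gamma> (snd p) - fst p $ k \<noteq> 0" if "p \<in> ball a r \<times> cbox 0 1" for p
        using wk[of "fst p"] gn[of "snd p"] that by (auto simp: mem_Times_iff)
      have vd: "vector_derivative \<gamma> (at t) = 2 * pi * \<i> * r * exp(2 * of_real pi * \<i> * t)" for t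
        by (simp add: \<gamma>_def vector_derivative_circlepath)
      have c2: "continuous_on (ball a r \<times> cbox 0 1) (\<lambda>p. \<gamma> (snd p))"
        unfolding g by (intro continuous_intros)
      have c3: "continuous_on (ball a r \<times> cbox 0 1) (\<lambda>p. (\<gamma> (snd p) - fst p $ k)^2)"
        by (intro continuous_intros c2)
      have c4: "continuous_on (ball a r \<times> cbox 0 1) (\<lambda>p. vector_derivative \<gamma> (at (snd p)))"
        unfolding vd by (intro continuous_intros)
      have "continuous_on (ball a r \<times> cbox 0 1) (\<lambda>p. f (sl (fst p) k (\<gamma> (snd p))) / (\<gamma> (snd p) - fst p $ k)^2 * vector_derivative \<gamma> (at (snd p)))"
        by (intro continuous_on_mult continuous_on_divide c1 c3 c4) (use ne in auto)
      then show ?thesis by (simp add: split_beta)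
    qed
    then show ?thesis
      unfolding contour_integral_integral cbox_interval[symmetric]
      using integral_continuous_on_param[where f = "\<lambda>w t. f (sl w k (\<gamma> t)) / (\<gamma> t - w$k)^2 * vector_derivative \<gamma> (at t)"]
      by blast
  qed
  have "continuous_on (ball a r) (pd f k)"
    by (rule continuous_on_eq[OF continuous_on_mult[OF continuous_on_const[of _ "1 / (2 * of_real pi * \<i>)"] cont]]) (simp add: rep)
  then show "isCont (pd f k) a"
    using \<open>r > 0\<close> continuous_on_interior by fastforce
qed

lemma has_derivative_vec:
  fixes f :: "'a::real_normed_vector \<Rightarrow> complex^'n"
  assumes "\<And>A. ((\<lambda>x. f x $ A) has_derivative (\<lambda>v. f' v $ A)) (at a within S)"
  shows "(f has_derivative f') (at a within S)"
proof (rule has_derivative_componentwise_within[THEN iffD2], rule)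
  fix i :: "complex^'n" assume "i \<in> Basis"
  then obtain A b where i: "i = axis A b" "b \<in> Basis" unfolding Basis_vec_def by blast
  have "((\<lambda>x. f x $ A \<bullet> b) has_derivative (\<lambda>x. f' x $ A \<bullet> b)) (at a within S)"
    using has_derivative_inner_left[OF assms[of A], of b] .
  then show "((\<lambda>x. f x \<bullet> i) has_derivative (\<lambda>x. f' x \<bullet> i)) (at a within S)"
    unfolding i inner_axis .
qed
lemma cont_blin_mat:
  fixes M :: "'a::topological_space \<Rightarrow> complex^'n^'m"
  assumes "\<And>A k. continuous_on S (\<lambda>s. M s $ A $ k)"
  shows "continuous_on S (\<lambda>s. Blinfun ((*v) (M s)))"
proof -
  have "Blinfun ((*v) (M s)) = blinfun_of_matrix (\<lambda>i j. (M s *v j) \<bullet> i)" for s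
    by (rule Blinfun_eq_matrix) simp
  then show ?thesis
    apply (simp only:)
    apply (rule continuous_on_blinfun_of_matrix)
    unfolding matrix_vector_mult_def
    apply (intro continuous_on_inner continuous_on_vec_lambda continuous_on_sum continuous_on_mult assms continuous_on_const)
    done
qed

lemma bl_lincomb: "bounded_linear (\<lambda>v::complex^'n. \<Sum>k\<in>UNIV. c k * v$k)"
  by (rule bounded_linear_sum) (rule bounded_linear_compose[OF bounded_linear_mult_right bounded_linear_vec_nth])

lemma cont_blin_sc:
  fixes c :: "'n::finite \<Rightarrow> 'a::topological_space \<Rightarrow> complex"
  assumes "\<And>k. continuous_on S (c k)"
  shows "continuous_on S (\<lambda>s. Blinfun (\<lambda>v::complex^'n. \<Sum>k\<in>UNIV. c k s * v$k))"
proof -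
  have "Blinfun (\<lambda>v::complex^'n. \<Sum>k\<in>UNIV. c k s * v$k) = blinfun_of_matrix (\<lambda>i j. (\<Sum>k\<in>UNIV. c k s * j$k) \<bullet> i)" for s
    by (rule Blinfun_eq_matrix) (rule bl_lincomb)
  then show ?thesis
    apply (simp only:)
    apply (rule continuous_on_blinfun_of_matrix)
    apply (intro continuous_intros assms)
    done
qed



lemma herm_expand:
  fixes x y :: "'a::finite \<Rightarrow> complex" and p r s t :: "'b::finite \<Rightarrow> 'a \<Rightarrow> complex"
  shows "(\<Sum>a\<in>UNIV. \<Sum>b\<in>UNIV. x a * (\<i> * (\<Sum>A\<in>UNIV. p A a * cnj (r A b) - s A a * cnj (t A b))) * cnj (y b))
    = \<i> * (\<Sum>A\<in>UNIV. (\<Sum>a\<in>UNIV. x a * p A a) * cnj (\<Sum>b\<in>UNIV. y b * r A b)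
                    - (\<Sum>a\<in>UNIV. x a * s A a) * cnj (\<Sum>b\<in>UNIV. y b * t A b))"
proof -
  have "(\<Sum>A\<in>UNIV. (\<Sum>a\<in>UNIV. x a * p A a) * cnj (\<Sum>b\<in>UNIV. y b * r A b)
                    - (\<Sum>a\<in>UNIV. x a * s A a) * cnj (\<Sum>b\<in>UNIV. y b * t A b))
     = (\<Sum>A\<in>UNIV. \<Sum>a\<in>UNIV. \<Sum>b\<in>UNIV. x a * (p A a * cnj (r A b) - s A a * cnj (t A b)) * cnj (y b))"
    by (simp add: sum_product cnj_sum sum_subtractf[symmetric] algebra_simps)
  also have "\<dots> = (\<Sum>a\<in>UNIV. \<Sum>b\<in>UNIV. \<Sum>A\<in>UNIV. x a * (p A a * cnj (r A b) - s A a * cnj (t A b)) * cnj (y b))"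
    apply (rule trans[OF sum.swap])
    apply (rule sum.cong[OF refl])
    apply (rule sum.swap)
    done
  finally show ?thesis
    by (simp add: sum_distrib_left sum_distrib_right algebra_simps)
qed


lemma part1:
  fixes X F :: "complex^'n \<Rightarrow> complex^'n"
  assumes pd: "pos_def_herm (gmet X F z)"
  shows "invertible (\<chi> A a. pd (\<lambda>w. X w $ A) a z)"
proof (rule ccontr)
  define M where "M = (\<chi> A a. pd (\<lambda>w. X w $ A) a z)"
  assume "\<not> invertible (\<chi> A a. pd (\<lambda>w. X w $ A) a z)"
  then have "\<not> invertible M" by (simp add: M_def)
  then obtain \<xi> where xi: "M *v \<xi> = 0" "\<xi> \<noteq> 0"
    using invertible_left_inverse matrix_left_invertible_ker by metis
  have Mx: "(\<Sum>a\<in>UNIV. \<xi>$a * pd (\<lambda>w. X w $ A) a z) = 0" for A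
  proof -
    have "(M *v \<xi>)$A = 0" using xi by simp
    then show ?thesis by (simp add: M_def matrix_vector_mult_def mult.commute)
  qed
  define q where "q = (\<Sum>a\<in>UNIV. \<Sum>b\<in>UNIV. \<xi> $ a * gmet X F z a b * cnj (\<xi> $ b))"
  have "q = \<i> * (\<Sum>A\<in>UNIV. (\<Sum>a\<in>UNIV. \<xi>$a * pd (\<lambda>w. X w $ A) a z) * cnj (\<Sum>b\<in>UNIV. \<xi>$b * pd (\<lambda>w. F w $ A) b z)
                    - (\<Sum>a\<in>UNIV. \<xi>$a * pd (\<lambda>w. F w $ A) a z) * cnj (\<Sum>b\<in>UNIV. \<xi>$b * pd (\<lambda>w. X w $ A) b z))"
    unfolding q_def gmet_def symp_def dV_def conjV_def
    using herm_expand[of "\<lambda>a. \<xi>$a" "\<lambda>A a. pd (\<lambda>w. X w $ A) a z" "\<lambda>A a. pd (\<lambda>w. F w $ A) a z"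
        "\<lambda>A a. pd (\<lambda>w. F w $ A) a z" "\<lambda>A a. pd (\<lambda>w. X w $ A) a z" "\<lambda>a. \<xi>$a"]
    by simp
  also have "\<dots> = 0" by (simp add: Mx)
  finally have "q = 0" .
  moreover have "Re q > 0" using pd xi(2) unfolding pos_def_herm_def q_def Let_def by blast
  ultimately show False by simp
qed



lemma axis_sum: "(\<Sum>B\<in>UNIV. axis A (1::complex) $ B * f B) = f A"
  by (simp add: axis_def if_distrib[of "\<lambda>x. x * _"] cong: if_cong)

lemma alg1:
  fixes G v h :: "'n::finite \<Rightarrow> complex" and P :: "'n \<Rightarrow> 'n \<Rightarrow> complex"
  shows "(\<Sum>A\<in>UNIV. G A * v A + (\<Sum>k\<in>UNIV. t * v k * P A k) * h A)
       = (\<Sum>B\<in>UNIV. ((\<Sum>A\<in>UNIV. t * P A B * h A) + G B) * v B)"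
proof -
  have "(\<Sum>A\<in>UNIV. (\<Sum>k\<in>UNIV. t * v k * P A k) * h A) = (\<Sum>A\<in>UNIV. \<Sum>k\<in>UNIV. t * P A k * h A * v k)"
    by (simp add: sum_distrib_left sum_distrib_right mult_ac)
  also have "\<dots> = (\<Sum>k\<in>UNIV. \<Sum>A\<in>UNIV. t * P A k * h A * v k)" by (rule sum.swap)
  also have "\<dots> = (\<Sum>k\<in>UNIV. (\<Sum>A\<in>UNIV. t * P A k * h A) * v k)"
    by (simp add: sum_distrib_right)
  finally have e: "(\<Sum>A\<in>UNIV. (\<Sum>k\<in>UNIV. t * v k * P A k) * h A) = (\<Sum>k\<in>UNIV. (\<Sum>A\<in>UNIV. t * P A k * h A) * v k)" .
  show ?thesis
    by (simp add: sum.distrib e distrib_right mult.commute[of "G _"] add.commute)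
qed


lemma poincare:
  fixes G :: "'n::finite \<Rightarrow> complex^'n \<Rightarrow> complex"
  assumes "open V" and sub: "ball c \<rho> \<subseteq> V" and holG: "\<And>A. holo_on (G A) V"
    and sym: "\<And>A B y. y \<in> V \<Longrightarrow> pd (G A) B y = pd (G B) A y"
  shows "\<exists>\<Phi>. holo_on \<Phi> (ball c \<rho>) \<and> (\<forall>x\<in>ball c \<rho>. \<forall>A. pd \<Phi> A x = G A x)"
proof -
  define S where "S = ball c \<rho>"
  have "open S" "convex S" by (simp_all add: S_def)
  have yin: "c + t *\<^sub>R (x - c) \<in> S" if "x \<in> S" "t \<in> cbox 0 1" for x t
  proof -
    have "norm (t *\<^sub>R (x - c)) = \<bar>t\<bar> * norm (x - c)" by simp
    also have "\<dots> \<le> norm (x - c)" using that by (auto intro: mult_left_le_one_le)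
    also have "\<dots> < \<rho>" using that by (simp add: S_def dist_norm norm_minus_commute)
    finally show ?thesis by (simp add: S_def dist_norm)
  qed
  have yinV: "c + t *\<^sub>R (x - c) \<in> V" if "x \<in> S" "t \<in> cbox 0 1" for x t
    using yin[OF that] sub S_def by auto
  have derG: "(G A has_derivative (\<lambda>v. \<Sum>k\<in>UNIV. v$k * pd (G A) k y)) (at y)" if "y \<in> V" for A y
    by (rule holo_deriv[OF holG that])
  have contG: "continuous_on V (G A)" for A by (rule holo_cont[OF holG])
  have contpd: "continuous_on V (pd (G A) B)" for A B by (rule pd_cont[OF holG \<open>open V\<close>])
  define f where "f x t = (\<Sum>A\<in>UNIV. G A (c + t *\<^sub>R (x - c)) * (x - c)$A)" for x t
  define coef where "coef B x t = (\<Sum>A\<in>UNIV. of_real t * pd (G A) B (c + t *\<^sub>R (x - c)) * (x - c)$A)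
      + G B (c + t *\<^sub>R (x - c))" for B x and t :: real
  define fx where "fx x t = Blinfun (\<lambda>v. \<Sum>B\<in>UNIV. coef B x t * v$B)" for x t
  have fxa: "blinfun_apply (fx x t) = (\<lambda>v. \<Sum>B\<in>UNIV. coef B x t * v$B)" for x t
    unfolding fx_def by (rule bounded_linear_Blinfun_apply[OF bl_lincomb])
  have derf: "((\<lambda>x. f x t) has_derivative blinfun_apply (fx x t)) (at x within S)"
    if x: "x \<in> S" and t: "t \<in> cbox 0 1" for x t
  proof -
    define y where "y = c + t *\<^sub>R (x - c)"
    have yV: "y \<in> V" using yinV[OF x t] by (simp add: y_def)
    have d1: "((\<lambda>x. c + t *\<^sub>R (x - c)) has_derivative (\<lambda>v. t *\<^sub>R v)) (at x)"
      by (auto intro!: derivative_eq_intros)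
    have d3: "((\<lambda>x. (x - c)$A) has_derivative (\<lambda>v. v$A)) (at x)" for A
    proof -
      have "((\<lambda>x. (x - c)$A) has_derivative (\<lambda>v. (v - 0)$A)) (at x)"
        by (rule bounded_linear.has_derivative[OF bounded_linear_vec_nth])
           (intro has_derivative_diff has_derivative_ident has_derivative_const)
      then show ?thesis by simp
    qed
    have d2: "((\<lambda>x. G A (c + t *\<^sub>R (x - c))) has_derivative (\<lambda>v. \<Sum>k\<in>UNIV. (t *\<^sub>R v)$k * pd (G A) k y)) (at x)" for A
      using has_derivative_compose[OF d1 derG[OF yV[unfolded y_def]]] by (simp add: o_def y_def)
    have "((\<lambda>x. f x t) has_derivative (\<lambda>v. \<Sum>A\<in>UNIV. G A y * v$A + (\<Sum>k\<in>UNIV. (t *\<^sub>R v)$k * pd (G A) k y) * (x - c)$A)) (at x)"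
      unfolding f_def y_def
      by (intro has_derivative_sum has_derivative_mult d2[unfolded y_def] d3)
    moreover have "(\<lambda>v. \<Sum>A\<in>UNIV. G A y * v$A + (\<Sum>k\<in>UNIV. (t *\<^sub>R v)$k * pd (G A) k y) * (x - c)$A) = blinfun_apply (fx x t)"
      unfolding fxa coef_def y_def[symmetric]
      using alg1[of "\<lambda>A. G A y" "\<lambda>k. v$k" "of_real t" "\<lambda>A k. pd (G A) k y" "\<lambda>A. (x - c)$A" for v]
      by (simp only: vector_scaleR_component) (simp add: scaleR_conv_of_real)
    ultimately show ?thesis by (auto intro: has_derivative_at_withinI)
  qed
  have contf: "continuous_on (cbox 0 1) (f x)" if "x \<in> S" for x
    unfolding f_def
    by (intro continuous_intros continuous_on_compose2[OF contG]) (auto intro: yinV[OF that])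
  have intf: "f x integrable_on cbox 0 1" if "x \<in> S" for x
    by (rule integrable_continuous[OF contf[OF that]])
  have contcoef: "continuous_on (S \<times> cbox 0 1) (\<lambda>p. coef B (fst p) (snd p))" for B
    unfolding coef_def
    by (intro continuous_intros continuous_on_compose2[OF contG] continuous_on_compose2[OF contpd])
       (auto intro: yinV)
  have contfx: "continuous_on (S \<times> cbox 0 1) (\<lambda>(x, t). fx x t)"
    unfolding fx_def split_beta
    by (rule cont_blin_sc[OF contcoef])
  define \<Phi> where "\<Phi> x = integral (cbox 0 1) (f x)" for x
  have derPhi: "(\<Phi> has_derivative blinfun_apply (integral (cbox 0 1) (fx x))) (at x)" if "x \<in> S" for x
  proof -
    have "(\<Phi> has_derivative blinfun_apply (integral (cbox 0 1) (fx x))) (at x within S)"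
      unfolding \<Phi>_def[abs_def]
      by (rule leibniz_rule[OF derf intf contfx that \<open>convex S\<close>])
    then show ?thesis using at_within_open[OF that \<open>open S\<close>] by simp
  qed
  have ftc: "integral (cbox 0 1) (coef B x) = G B x" if x: "x \<in> S" for B x
  proof -
    define \<phi> where "\<phi> t = of_real t * G B (c + t *\<^sub>R (x - c))" for t :: real
    have vd: "(\<phi> has_vector_derivative coef B x t) (at t within {0..1})" if t: "t \<in> {0..1}" for t
    proof -
      define y where "y = c + t *\<^sub>R (x - c)"
      have yV: "y \<in> V" using yinV[OF x] t by (simp add: y_def)
      have d1: "((\<lambda>t. c + t *\<^sub>R (x - c)) has_derivative (\<lambda>s. s *\<^sub>R (x - c))) (at t within {0..1})"
        by (auto intro!: derivative_eq_intros)
      have d2: "((\<lambda>t. G B (c + t *\<^sub>R (x - c))) has_derivative (\<lambda>s. \<Sum>k\<in>UNIV. (s *\<^sub>R (x - c))$k * pd (G B) k y)) (at t within {0..1})"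
        using has_derivative_compose[OF d1 derG[OF yV[unfolded y_def]]] by (simp add: o_def y_def)
      have d0: "((\<lambda>t. complex_of_real t) has_derivative (\<lambda>s. of_real s)) (at t within {0..1})"
        using bounded_linear.has_derivative[OF bounded_linear_of_real has_derivative_ident] .
      have "(\<phi> has_derivative (\<lambda>s. of_real t * (\<Sum>k\<in>UNIV. (s *\<^sub>R (x - c))$k * pd (G B) k y) + of_real s * G B y)) (at t within {0..1})"
        unfolding \<phi>_def y_def using has_derivative_mult[OF d0 d2] by (simp add: y_def)
      moreover have "(\<lambda>s. of_real t * (\<Sum>k\<in>UNIV. (s *\<^sub>R (x - c))$k * pd (G B) k y) + of_real s * G B y)
          = (\<lambda>s. s *\<^sub>R coef B x t)"
      proof
        fix s :: real
        have "of_real t * (\<Sum>k\<in>UNIV. (s *\<^sub>R (x - c))$k * pd (G B) k y)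
            = of_real s * (\<Sum>A\<in>UNIV. of_real t * pd (G A) B y * (x - c)$A)"
          using sym[OF yV] by (simp only: vector_scaleR_component) (simp add: scaleR_conv_of_real sum_distrib_left mult_ac)
        then show "of_real t * (\<Sum>k\<in>UNIV. (s *\<^sub>R (x - c))$k * pd (G B) k y) + of_real s * G B y = s *\<^sub>R coef B x t"
          unfolding coef_def y_def[symmetric] by (simp add: scaleR_conv_of_real distrib_left)
      qed
      ultimately show ?thesis unfolding has_vector_derivative_def by simp
    qed
    have "(coef B x has_integral (\<phi> 1 - \<phi> 0)) {0..1}"
      by (rule fundamental_theorem_of_calculus[OF _ vd]) simp_all
    then show ?thesis by (simp add: \<phi>_def cbox_interval integral_unique)
  qed
  have intcoef: "coef B x integrable_on cbox 0 1" if "x \<in> S" for B x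
  proof -
    have "continuous_on (cbox 0 1) (\<lambda>t. (\<lambda>p. coef B (fst p) (snd p)) (x, t))"
      by (rule continuous_on_compose2[OF contcoef[of B]]) (auto intro!: continuous_intros simp: that)
    then show ?thesis by (intro integrable_continuous) simp
  qed
  have Dphi: "blinfun_apply (integral (cbox 0 1) (fx x)) = (\<lambda>v. \<Sum>B\<in>UNIV. v$B * G B x)" if x: "x \<in> S" for x
  proof
    fix v
    have "continuous_on (cbox 0 1) (\<lambda>t. (\<lambda>(x, t). fx x t) (x, t))"
      by (rule continuous_on_compose2[OF contfx]) (auto intro!: continuous_intros simp: x)
    then have intfx: "fx x integrable_on cbox 0 1" by (intro integrable_continuous) simp
    have "blinfun_apply (integral (cbox 0 1) (fx x)) v = integral (cbox 0 1) (\<lambda>t. \<Sum>B\<in>UNIV. coef B x t * v$B)"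
      using blinfun_apply_integral[OF intfx] by (simp add: fxa)
    also have "\<dots> = (\<Sum>B\<in>UNIV. integral (cbox 0 1) (\<lambda>t. coef B x t * v$B))"
      using intcoef[OF x] by (intro integral_sum) (auto intro!: integrable_on_mult_left simp: cbox_interval)
    also have "\<dots> = (\<Sum>B\<in>UNIV. v$B * G B x)"
      using ftc[OF x] by (simp add: mult.commute cbox_interval)
    finally show "blinfun_apply (integral (cbox 0 1) (fx x)) v = (\<Sum>B\<in>UNIV. v$B * G B x)" .
  qed
  have derP: "(\<Phi> has_derivative (\<lambda>v. \<Sum>B\<in>UNIV. v$B * G B x)) (at x)" if "x \<in> S" for x
    using derPhi[OF that] Dphi[OF that] by simp
  have "holo_on \<Phi> S"
    unfolding holo_on_def
  proof
    fix x assume "x \<in> S"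
    show "\<exists>D. (\<Phi> has_derivative D) (at x) \<and> (\<forall>c v. D (c *s v) = c * D v)"
      by (rule exI[of _ "\<lambda>v. \<Sum>B\<in>UNIV. v$B * G B x"])
         (simp add: derP[OF \<open>x \<in> S\<close>] sum_distrib_left mult_ac)
  qed
  moreover have "pd \<Phi> A x = G A x" if "x \<in> S" for A x
    unfolding pd_def frechet_derivative_at[OF derP[OF that], symmetric] using axis_sum[of A "\<lambda>B. G B x"]
    by simp
  ultimately show ?thesis unfolding S_def by blast
qed



lemma expand_bil:
  fixes P Q :: "complex^'n^'n"
  shows "(\<Sum>C\<in>UNIV. (P *v u)$C * (Q *v w)$C) = (\<Sum>a\<in>UNIV. \<Sum>b\<in>UNIV. u$a * w$b * (\<Sum>C\<in>UNIV. P$C$a * Q$C$b))"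
proof -
  have "(\<Sum>C\<in>UNIV. (P *v u)$C * (Q *v w)$C) = (\<Sum>C\<in>UNIV. \<Sum>a\<in>UNIV. \<Sum>b\<in>UNIV. u$a * w$b * (P$C$a * Q$C$b))"
    by (simp add: matrix_vector_mult_def sum_product mult_ac)
  also have "\<dots> = (\<Sum>a\<in>UNIV. \<Sum>b\<in>UNIV. \<Sum>C\<in>UNIV. u$a * w$b * (P$C$a * Q$C$b))"
    apply (rule trans[OF sum.swap])
    apply (rule sum.cong[OF refl])
    apply (rule sum.swap)
    done
  finally show ?thesis by (simp add: sum_distrib_left)
qed

lemma mat_sym:
  fixes M N :: "complex^'n^'n"
  assumes iso: "\<And>a b. (\<Sum>A\<in>UNIV. M$A$a * N$A$b - N$A$a * M$A$b) = 0"
  shows "(\<Sum>C\<in>UNIV. (M *v u)$C * (N *v w)$C) = (\<Sum>C\<in>UNIV. (N *v u)$C * (M *v w)$C)"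
proof -
  have "(\<Sum>C\<in>UNIV. M$C$a * N$C$b) = (\<Sum>C\<in>UNIV. N$C$a * M$C$b)" for a b
    using iso[of a b] by (simp add: sum_subtractf)
  then show ?thesis unfolding expand_bil by simp
qed

lemma mv_smult: "(M::complex^'n^'m) *v (c *s v) = c *s (M *v v)"
  by (simp add: vec_eq_iff matrix_vector_mult_def sum_distrib_left mult_ac)


lemma part2:
  fixes U :: "(complex^'n) set" and X F :: "complex^'n \<Rightarrow> complex^'n"
  assumes "open U"
    and holX: "\<forall>A. holo_on (\<lambda>z. X z $ A) U"
    and holF: "\<forall>A. holo_on (\<lambda>z. F z $ A) U"
    and posd: "\<forall>z\<in>U. pos_def_herm (gmet X F z)"
    and iso: "\<forall>z\<in>U. \<forall>a b. symp (dV X F a z) (dV X F b z) = 0"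
    and "z0 \<in> U"
  shows "\<exists>U0 W (Fpot :: complex^'n \<Rightarrow> complex).
          open U0 \<and> z0 \<in> U0 \<and> U0 \<subseteq> U \<and> open W \<and> X ` U0 \<subseteq> W \<and> holo_on Fpot W
          \<and> (\<forall>z\<in>U0. \<forall>A. F z $ A = pd Fpot A (X z))"
proof -
  define Mx where "Mx z = (\<chi> A a. pd (\<lambda>w. X w $ A) a z)" for z
  define Nf where "Nf z = (\<chi> A a. pd (\<lambda>w. F w $ A) a z)" for z
  have inv: "invertible (Mx z)" if "z \<in> U" for z
    unfolding Mx_def using part1 posd that by blast
  have derX: "(X has_derivative (\<lambda>v. Mx z *v v)) (at z)" if "z \<in> U" for z
  proof (rule has_derivative_vec)
    fix A
    show "((\<lambda>x. X x $ A) has_derivative (\<lambda>v. (Mx z *v v) $ A)) (at z)"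
      using holo_deriv[OF holX[rule_format] that, of A]
      by (simp add: Mx_def matrix_vector_mult_def mult.commute)
  qed
  have derX': "(X has_derivative blinfun_apply (Blinfun ((*v) (Mx z)))) (at z)" if "z \<in> U" for z
    using derX[OF that] by (simp add: bounded_linear_Blinfun_apply)
  have contf: "continuous_on U (\<lambda>z. Blinfun ((*v) (Mx z)))"
    by (rule cont_blin_mat) (simp add: Mx_def pd_cont[OF holX[rule_format] \<open>open U\<close>])
  obtain Bi where Bi: "Bi ** Mx z0 = mat 1"
    using inv[OF \<open>z0 \<in> U\<close>] unfolding invertible_def by blast
  have invf: "Blinfun ((*v) Bi) o\<^sub>L Blinfun ((*v) (Mx z0)) = id_blinfun"
    by (rule blinfun_eqI) (simp add: bounded_linear_Blinfun_apply matrix_vector_mul_assoc Bi)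
  obtain U' V g g' where "open U'" "U' \<subseteq> U" "z0 \<in> U'" "open V" "X z0 \<in> V"
    and hom: "homeomorphism U' V X g"
    and derg: "\<And>y. y \<in> V \<Longrightarrow> (g has_derivative (g' y)) (at y)"
    and g': "\<And>y. y \<in> V \<Longrightarrow> g' y = inv (blinfun_apply (Blinfun ((*v) (Mx (g y)))))"
    and bij: "\<And>y. y \<in> V \<Longrightarrow> bij (blinfun_apply (Blinfun ((*v) (Mx (g y)))))"
    by (rule inverse_function_theorem[OF \<open>open U\<close> derX' contf \<open>z0 \<in> U\<close> invf]) blast+
  have gU: "g y \<in> U" if "y \<in> V" for y
    using hom that \<open>U' \<subseteq> U\<close> unfolding homeomorphism_def by blast
  have bij': "bij ((*v) (Mx (g y)))" if "y \<in> V" for y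
    using bij[OF that] by (simp add: bounded_linear_Blinfun_apply)
  have g'': "g' y = inv ((*v) (Mx (g y)))" if "y \<in> V" for y
    using g'[OF that] by (simp add: bounded_linear_Blinfun_apply)
  have Mg: "Mx (g y) *v g' y v = v" if "y \<in> V" for y v
    using g''[OF that] bij'[OF that] by (simp add: bij_is_surj surj_f_inv_f)
  have Lsc: "g' y (c *s v) = c *s g' y v" if "y \<in> V" for y c v
  proof -
    have "Mx (g y) *v g' y (c *s v) = Mx (g y) *v (c *s g' y v)"
      by (simp add: Mg[OF that] mv_smult)
    then show ?thesis using bij'[OF that] unfolding bij_def inj_def by blast
  qed
  define G where "G A y = F (g y) $ A" for A y
  have derG: "(G A has_derivative (\<lambda>v. \<Sum>k\<in>UNIV. (g' y v)$k * pd (\<lambda>w. F w $ A) k (g y))) (at y)"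
    if "y \<in> V" for A y
    using has_derivative_compose[OF derg[OF that] holo_deriv[OF holF[rule_format] gU[OF that]], of A]
    unfolding G_def[abs_def] o_def by simp
  have holG: "holo_on (G A) V" for A
    unfolding holo_on_def
  proof
    fix y assume "y \<in> V"
    show "\<exists>D. (G A has_derivative D) (at y) \<and> (\<forall>c v. D (c *s v) = c * D v)"
      by (rule exI, rule conjI[OF derG[OF \<open>y \<in> V\<close>]])
         (simp add: Lsc[OF \<open>y \<in> V\<close>] sum_distrib_left mult_ac)
  qed
  have pdG: "pd (G A) B y = (Nf (g y) *v g' y (axis B 1))$A" if "y \<in> V" for A B y
    unfolding pd_def[of "G A"] frechet_derivative_at[OF derG[OF that], symmetric]
    by (simp add: Nf_def matrix_vector_mult_def mult.commute)
  have symG: "pd (G A) B y = pd (G B) A y" if y: "y \<in> V" for A B y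
  proof -
    define u where "u = g' y (axis A 1)"
    define w where "w = g' y (axis B 1)"
    have Mu: "Mx (g y) *v u = axis A 1" and Mw: "Mx (g y) *v w = axis B 1"
      by (simp_all add: u_def w_def Mg[OF y])
    have isoM: "(\<Sum>C\<in>UNIV. Mx (g y)$C$a * Nf (g y)$C$b - Nf (g y)$C$a * Mx (g y)$C$b) = 0" for a b
      using iso gU[OF y] unfolding symp_def dV_def Mx_def Nf_def by auto
    have "pd (G A) B y = (\<Sum>C\<in>UNIV. (Mx (g y) *v u)$C * (Nf (g y) *v w)$C)"
      unfolding pdG[OF y] Mu w_def by (simp add: axis_sum)
    also have "\<dots> = (\<Sum>C\<in>UNIV. (Nf (g y) *v u)$C * (Mx (g y) *v w)$C)"
      by (rule mat_sym[OF isoM])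
    also have "\<dots> = pd (G B) A y"
      unfolding pdG[OF y] Mw u_def by (simp add: axis_sum mult.commute)
    finally show ?thesis .
  qed
  obtain \<rho> where "\<rho> > 0" and ball: "ball (X z0) \<rho> \<subseteq> V"
    using \<open>open V\<close> \<open>X z0 \<in> V\<close> open_contains_ball by blast
  obtain \<Phi> where hPhi: "holo_on \<Phi> (ball (X z0) \<rho>)" and pdPhi: "\<forall>x\<in>ball (X z0) \<rho>. \<forall>A. pd \<Phi> A x = G A x"
    using poincare[OF \<open>open V\<close> ball holG symG] by blast
  define U0 where "U0 = U' \<inter> X -` ball (X z0) \<rho>"
  have contX: "continuous_on U' X" using hom unfolding homeomorphism_def by blast
  have gX: "g (X z) = z" if "z \<in> U'" for z using hom that unfolding homeomorphism_def by blast
  have "open U0" unfolding U0_def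
    using contX continuous_on_open_vimage[OF \<open>open U'\<close>] open_ball by (metis Int_commute)
  moreover have "z0 \<in> U0" using \<open>z0 \<in> U'\<close> \<open>\<rho> > 0\<close> by (simp add: U0_def)
  moreover have "U0 \<subseteq> U" using \<open>U' \<subseteq> U\<close> by (auto simp: U0_def)
  moreover have "X ` U0 \<subseteq> ball (X z0) \<rho>" by (auto simp: U0_def)
  moreover have "\<forall>z\<in>U0. \<forall>A. F z $ A = pd \<Phi> A (X z)"
    using pdPhi gX by (auto simp: U0_def G_def)
  ultimately show ?thesis using hPhi by blast
qed


theorem mainTheorem2:
  fixes U :: "(complex^'n) set"
    and X F :: "complex^'n \<Rightarrow> complex^'n"
  assumes "open U"
    and "\<forall>A. holo_on (\<lambda>z. X z $ A) U"
    and "\<forall>A. holo_on (\<lambda>z. F z $ A) U"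
    and "\<forall>z\<in>U. pos_def_herm (gmet X F z)"
    and "\<forall>z\<in>U. \<forall>a b. symp (dV X F a z) (dV X F b z) = 0"
  shows "(\<forall>z\<in>U. invertible (\<chi> A a. pd (\<lambda>w. X w $ A) a z))
    \<and> (\<forall>z0\<in>U. \<exists>U0 W (Fpot :: complex^'n \<Rightarrow> complex).
          open U0 \<and> z0 \<in> U0 \<and> U0 \<subseteq> U \<and> open W \<and> X ` U0 \<subseteq> W \<and> holo_on Fpot W
          \<and> (\<forall>z\<in>U0. \<forall>A. F z $ A = pd Fpot A (X z)))"
proof
  show "\<forall>z\<in>U. invertible (\<chi> A a. pd (\<lambda>w. X w $ A) a z)"
    using part1 assms(4) by blast
  show "\<forall>z0\<in>U. \<exists>U0 W (Fpot :: complex^'n \<Rightarrow> complex).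
          open U0 \<and> z0 \<in> U0 \<and> U0 \<subseteq> U \<and> open W \<and> X ` U0 \<subseteq> W \<and> holo_on Fpot W
          \<and> (\<forall>z\<in>U0. \<forall>A. F z $ A = pd Fpot A (X z))"
    using part2[OF assms] by blast
qed

end
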